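(* Let $S\subset\mathrm{supp}(\Pi)$ be a set in $\mathcal B_m$ for some level $m$ of the tree decomposition, let $t>0$, and set $h_n=\left\{\Pi(S)\big(t+d\log(n/\Pi(S))\big)/n\right\}^{1/(d+2)}$. Assume (A0)–(A3), $h_n\le 2^{-m}$, and $t+d^2\log(1/h_n)\le nh_n^d$. Let $\widehat f(x;h_n)=\widehat\eta_1(x;h_n,S)-\widehat\eta_{-1}(x;h_n,S)$ be built from $n$ i.i.d. observations of the conditional law of $(X,A,R)$ given $X\in S$. Then with probability at least $1-4e^{-t}$, \[ \sup_{x\in\mathrm{supp}(\Pi)\cap S}|\widehat f(x;h_n)-f^\ast(x)|\le 4Ch_n, \] where $C=C(M,c_1,c_2,L,L_K,\|K\|_\infty,\ell_K,R_K)$ is the constant for which, for every such $S$, every $0<h\le2^{-m}$, $j=\pm1$, and $t>0$ with $t+d^2\log(1/h)\le nh^d$, with probability $\ge1-2e^{-t}$ one has $\sup_{x\in\mathrm{supp}(\Pi)\cap S}|\widehat\eta_j(x;h,S)-\eta_j(x)|\le C\big(h+\sqrt{\Pi(S)(t+d^2\log(1/h))/(nh^d)}\big)$.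
   Context: $(X,A,R)$ is a random triple: $X\in\mathbb R^p$ with known marginal distribution $\Pi$, $A\in\{-1,1\}$ with $P(A=1\mid X)=P(A=-1\mid X)=1/2$, $R$ real. $\eta_j(x)=\mathbb E[R\mid A=j,X=x]$ and $f^\ast=\eta_1-\eta_{-1}$. For measurable $S$, $\Pi_S(\cdot)=\Pi(\cdot\mid X\in S)$. $K_h(u)=K(u/h)/h^p$, $Q_h(x\mid S)=\int K_h(x-y)\,d\Pi_S(y)$, and for i.i.d. $(X^{(i)},A^{(i)},R^{(i)})_{i=1}^n$ from the conditional law given $X\in S$, $\widehat\eta_j(x;h,S)=\frac1n\sum_{i=1}^n\frac{R^{(i)}I\{A^{(i)}=j\}K_h(x-X^{(i)})}{Q_h(x\mid S)P(A^{(i)}=j)}$. Tree decomposition: $\{T_{i,j}\}$ with $T_{1,1}=\mathrm{supp}(\Pi)$, each level a disjoint partition, nested levels, $\mathrm{diam}(T_{i,j})\le K_12^{-i}$, and an integer $1\le d\le p$ and $0<c_1\le c_2$ with $c_1r^d\le\Pi(B(x,r)\cap T_{i,j})\le c_2r^d$ for $0<r\le2^{-i}$, $x\in T_{i,j}$; $\mathcal B_i$ is generated by level-$i$ cells. (A0) $\eta_{\pm1}$ are $L$-Lipschitz. (A1) $|R|\le M$ a.s. (A2) $K\ge0$ compactly supported, $K(x)\le\|K\|_\infty I\{\|x\|_2\le R_K\}$, $L_K$-Lipschitz, $K(x)\ge\ell_KI\{\|x\|_2\le1\}$, $\ell_K>0$. (A3) $\mathrm{supp}(\Pi)$ admits such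 a tree decomposition. *)

theory Defs
  imports "HOL-Probability.Probability"
begin

definition obsX :: "'a \<times> int \<times> real \<Rightarrow> 'a" where "obsX z = fst z"
definition obsA :: "'a \<times> int \<times> real \<Rightarrow> int" where "obsA z = fst (snd z)"
definition obsR :: "'a \<times> int \<times> real \<Rightarrow> real" where "obsR z = snd (snd z)"

definition msupp :: "'a::metric_space measure \<Rightarrow> 'a set" where
  "msupp Pi_X = {x. \<forall>r>0. 0 < emeasure Pi_X (ball x r)}"

text \<open>Tree decomposition of supp(Pi): T i is the set of level-i cells (levels i \<ge> 1).\<close>
definition tree_decomp ::
  "'a::euclidean_space measure \<Rightarrow> (nat \<Rightarrow> 'a set set) \<Rightarrow> nat \<Rightarrow> real \<Rightarrow> real \<Rightarrow> real \<Rightarrow> bool" where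
  "tree_decomp Pi_X T d c1 c2 K1 \<longleftrightarrow>
     T 1 = {msupp Pi_X} \<and>
     (\<forall>i\<ge>1. (\<forall>C\<in>T i. C \<noteq> {} \<and> C \<in> sets Pi_X) \<and> \<Union>(T i) = msupp Pi_X \<and> disjoint (T i)) \<and>
     (\<forall>i\<ge>1. \<forall>C\<in>T (Suc i). \<exists>C'\<in>T i. C \<subseteq> C') \<and>
     (\<forall>i\<ge>1. \<forall>C\<in>T i. diameter C \<le> K1 * (1/2)^i) \<and>
     1 \<le> d \<and> d \<le> DIM('a) \<and> 0 < c1 \<and> c1 \<le> c2 \<and>
     (\<forall>i\<ge>1. \<forall>C\<in>T i. \<forall>x\<in>C. \<forall>r. 0 < r \<and> r \<le> (1/2)^i \<longrightarrow>
         c1 * r^d \<le> measure Pi_X (ball x r \<inter> C) \<and> measure Pi_X (ball x r \<inter> C) \<le> c2 * r^d)"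

definition level_sigma :: "'a::euclidean_space measure \<Rightarrow> (nat \<Rightarrow> 'a set set) \<Rightarrow> nat \<Rightarrow> 'a set set" where
  "level_sigma Pi_X T m = sigma_sets (msupp Pi_X) (T m)"

text \<open>P(A=j | X) = 1/2 and eta j (x) = E[R | A = j, X = x] are expressed through their defining
  integral identities.\<close>
definition model ::
  "('a::euclidean_space \<times> int \<times> real) measure \<Rightarrow> 'a measure \<Rightarrow> (int \<Rightarrow> 'a \<Rightarrow> real) \<Rightarrow> bool" where
  "model D Pi_X \<eta> \<longleftrightarrow>
     prob_space D \<and> sets D = sets borel \<and> prob_space Pi_X \<and> sets Pi_X = sets borel \<and>
     distr D borel obsX = Pi_X \<and>
     (AE z in D. obsA z \<in> {-1, 1}) \<and>
     (\<forall>j\<in>{-1, 1::int}. \<forall>B\<in>sets borel.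
        measure D {z\<in>space D. obsX z \<in> B \<and> obsA z = j} = measure Pi_X B / 2) \<and>
     (\<forall>j\<in>{-1, 1::int}. \<eta> j \<in> borel_measurable borel \<and> integrable Pi_X (\<eta> j) \<and>
        (\<forall>B\<in>sets borel.
          (\<integral>z. indicator {z. obsX z \<in> B \<and> obsA z = j} z * obsR z \<partial>D)
            = (\<integral>x. indicator B x * \<eta> j x \<partial>Pi_X) / 2))"

definition fstar :: "(int \<Rightarrow> 'a \<Rightarrow> real) \<Rightarrow> 'a \<Rightarrow> real" where
  "fstar \<eta> x = \<eta> 1 x - \<eta> (-1) x"

text \<open>(A2) kernel assumptions; the sup-norm of K is its actual supremum.\<close>
definition kernel_ok :: "('a::euclidean_space \<Rightarrow> real) \<Rightarrow> real \<Rightarrow> real \<Rightarrow> real \<Rightarrow> bool" where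
  "kernel_ok K RK LK lK \<longleftrightarrow>
     (\<forall>x. 0 \<le> K x) \<and> bdd_above (range (\<lambda>x. \<bar>K x\<bar>)) \<and>
     (\<forall>x. K x \<le> (SUP y. \<bar>K y\<bar>) * indicator {x. norm x \<le> RK} x) \<and>
     LK-lipschitz_on UNIV K \<and>
     (\<forall>x. lK * indicator {x. norm x \<le> 1} x \<le> K x) \<and> 0 < lK"

definition Kh :: "('a::euclidean_space \<Rightarrow> real) \<Rightarrow> real \<Rightarrow> 'a \<Rightarrow> real" where
  "Kh K h u = K ((1/h) *\<^sub>R u) / h ^ DIM('a)"

definition Qh :: "'a::euclidean_space measure \<Rightarrow> ('a \<Rightarrow> real) \<Rightarrow> real \<Rightarrow> 'a set \<Rightarrow> 'a \<Rightarrow> real" where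
  "Qh Pi_X K h S x = (\<integral>y. Kh K h (x - y) \<partial>(uniform_measure Pi_X S))"

definition cond_law :: "('a \<times> int \<times> real) measure \<Rightarrow> 'a set \<Rightarrow> ('a \<times> int \<times> real) measure" where
  "cond_law D S = uniform_measure D {z\<in>space D. obsX z \<in> S}"

definition sample :: "('a \<times> int \<times> real) measure \<Rightarrow> 'a set \<Rightarrow> nat \<Rightarrow> (nat \<Rightarrow> 'a \<times> int \<times> real) measure" where
  "sample D S n = PiM {..<n} (\<lambda>_. cond_law D S)"

definition etahat ::
  "'a::euclidean_space measure \<Rightarrow> ('a \<times> int \<times> real) measure \<Rightarrow> ('a \<Rightarrow> real) \<Rightarrow> nat \<Rightarrow> real \<Rightarrow> 'a set
    \<Rightarrow> int \<Rightarrow> (nat \<Rightarrow> 'a \<times> int \<times> real) \<Rightarrow> 'a \<Rightarrow> real" where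
  "etahat Pi_X D K n h S j \<omega> x =
     (\<Sum>i<n. obsR (\<omega> i) * (if obsA (\<omega> i) = j then 1 else 0) * Kh K h (x - obsX (\<omega> i))
        / (Qh Pi_X K h S x * measure (cond_law D S) {z\<in>space (cond_law D S). obsA z = j})) / real n"

definition fhat ::
  "'a::euclidean_space measure \<Rightarrow> ('a \<times> int \<times> real) measure \<Rightarrow> ('a \<Rightarrow> real) \<Rightarrow> nat \<Rightarrow> real \<Rightarrow> 'a set
    \<Rightarrow> (nat \<Rightarrow> 'a \<times> int \<times> real) \<Rightarrow> 'a \<Rightarrow> real" where
  "fhat Pi_X D K n h S \<omega> x = etahat Pi_X D K n h S 1 \<omega> x - etahat Pi_X D K n h S (-1) \<omega> x"

definition thmA1_const ::
  "'a::euclidean_space measure \<Rightarrow> ('a \<times> int \<times> real) measure \<Rightarrow> (int \<Rightarrow> 'a \<Rightarrow> real) \<Rightarrow> ('a \<Rightarrow> real)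
    \<Rightarrow> (nat \<Rightarrow> 'a set set) \<Rightarrow> nat \<Rightarrow> nat \<Rightarrow> nat \<Rightarrow> real \<Rightarrow> bool" where
  "thmA1_const Pi_X D \<eta> K T d m n C \<longleftrightarrow>
     (\<forall>S h j t. S \<subseteq> msupp Pi_X \<and> S \<in> level_sigma Pi_X T m \<and> S \<noteq> {} \<and>
        0 < h \<and> h \<le> (1/2)^m \<and> j \<in> {-1, 1} \<and> 0 < t \<and>
        t + real d ^ 2 * ln (1/h) \<le> real n * h ^ d \<longrightarrow>
        (\<exists>E\<in>sets (sample D S n). measure (sample D S n) E \<ge> 1 - 2 * exp (-t) \<and>
           (\<forall>\<omega>\<in>E. \<forall>x\<in>msupp Pi_X \<inter> S.
              \<bar>etahat Pi_X D K n h S j \<omega> x - \<eta> j x\<bar>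
                \<le> C * (h + sqrt (measure Pi_X S * (t + real d ^ 2 * ln (1/h)) / (real n * h ^ d))))))"

end

theory Submission
  imports Defs
begin

lemma sig_in_sets:
  assumes "x \<in> sigma_sets \<Omega> G" "\<Omega> \<in> sets M" "G \<subseteq> sets M"
  shows "x \<in> sets M"
  using assms by induct auto

lemma ln2_half: "ln (2::real) \<ge> 1/2"
proof -
  have "ln (1/2::real) \<le> 1/2 - 1" by (rule ln_le_minus_one) simp
  then show ?thesis by (simp add: ln_div)
qed

lemma key_hd:
  fixes p q t h B :: real and n d :: nat
  assumes p: "0 < p" "p \<le> 1" and n: "0 < n" and d: "1 \<le> d" and t: "0 < t"
    and h: "0 < h" "h \<le> 1/2"
    and hp: "h ^ (d+2) = p * (t + real d * ln (real n / p)) / real n"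
    and cond: "t + real d ^ 2 * ln (1/h) \<le> real n * h ^ d"
  shows "p / real n \<le> h ^ d"
proof (rule ccontr)
  assume A: "\<not> p / real n \<le> h ^ d"
  define q where "q = p / real n"
  have q0: "0 < q" using p n by (simp add: q_def)
  have nq: "real n / p = 1 / q" using p n by (simp add: q_def)
  have q1: "q \<le> 1" using p n by (simp add: q_def field_simps)
  have lq: "0 \<le> ln (1/q)" using q0 q1 by simp
  have hd: "h ^ d < q" using A q_def by simp
  have "h ^ (d+2) = h^d * h^2" by (rule power_add)
  also have "\<dots> \<le> h^d * (1/4)"
  proof -
    have "h^2 \<le> (1/2)^2" using h by (intro power_mono) auto
    then show ?thesis using h by (intro mult_left_mono) (auto simp: power2_eq_square)
  qed
  also have "\<dots> < q * (1/4)" using hd by simp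
  finally have lt: "h ^ (d+2) < q * (1/4)" .
  have "h ^ (d+2) = q * (t + real d * ln (1/q))" using hp[unfolded nq] by (simp add: q_def)
  then have "q * (t + real d * ln (1/q)) < q * (1/4)" using lt by simp
  then have B: "t + real d * ln (1/q) < 1/4" using q0 by simp
  have "ln (1/q) \<le> real d * ln (1/q)" using d lq by (simp add: mult_le_cancel_right1)
  then have l4: "ln (1/q) < 1/4" using B t by linarith
  have "1/q < 2"
  proof (rule ccontr)
    assume "\<not> 1/q < 2"
    then have "ln 2 \<le> ln (1/q)" using q0 by simp
    then show False using l4 ln2_half by linarith
  qed
  then have "real n < 2 * p" using q0 n p by (simp add: q_def field_simps)
  then have n1: "n = 1" using p n by linarith
  have "h ^ d \<le> h ^ 1" using h d by (intro power_decreasing) auto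
  then have hd2: "h ^ d \<le> 1/2" using h by simp
  have "ln 2 \<le> ln (1/h)" using h by (simp add: field_simps)
  moreover have "ln (1/h) \<le> real d ^ 2 * ln (1/h)"
  proof -
    have d2: "1 \<le> real d ^ 2" using d by (simp add: one_le_power)
    have "0 \<le> ln (1/h)" using h by simp
    then have "1 * ln (1/h) \<le> real d ^ 2 * ln (1/h)" by (rule mult_right_mono[OF d2])
    then show ?thesis by simp
  qed
  moreover have "t + real d ^ 2 * ln (1/h) \<le> h ^ d" using cond n1 by simp
  ultimately show False using t ln2_half hd2 by linarith
qed

theorem corollaryA1:
  fixes D :: "('a::euclidean_space \<times> int \<times> real) measure"
    and Pi_X :: "'a measure" and \<eta> :: "int \<Rightarrow> 'a \<Rightarrow> real"
    and K :: "'a \<Rightarrow> real" and T :: "nat \<Rightarrow> 'a set set"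
    and d m n :: nat and hn c1 c2 K1 L M RK LK lK C t :: real and S :: "'a set"
  assumes model: "model D Pi_X \<eta>"
    and A0: "\<forall>j\<in>{-1, 1::int}. L-lipschitz_on UNIV (\<eta> j)"
    and A1: "AE z in D. \<bar>obsR z\<bar> \<le> M"
    and A2: "kernel_ok K RK LK lK"
    and A3: "tree_decomp Pi_X T d c1 c2 K1"
    and m: "1 \<le> m" and n: "0 < n"
    and S: "S \<subseteq> msupp Pi_X" "S \<in> level_sigma Pi_X T m" "S \<noteq> {}"
    and t: "0 < t"
    and hn_def: "hn = (measure Pi_X S * (t + real d * ln (real n / measure Pi_X S)) / real n) powr (1 / (real d + 2))"
    and hn_le: "hn \<le> (1/2)^m"
    and cond: "t + real d ^ 2 * ln (1/hn) \<le> real n * hn ^ d"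
    and Cprop: "thmA1_const Pi_X D \<eta> K T d m n C"
  shows "\<exists>E\<in>sets (sample D S n). measure (sample D S n) E \<ge> 1 - 4 * exp (-t) \<and>
           (\<forall>\<omega>\<in>E. \<forall>x\<in>msupp Pi_X \<inter> S. \<bar>fhat Pi_X D K n hn S \<omega> x - fstar \<eta> x\<bar> \<le> 4 * C * hn)"
proof -
  have Dp: "prob_space D" and sD: "sets D = sets borel" and Pp: "prob_space Pi_X"
    and sP: "sets Pi_X = sets borel" and distr: "distr D borel obsX = Pi_X"
    using model unfolding model_def by auto
  have d1: "1 \<le> d" using A3 unfolding tree_decomp_def by auto
  have T1: "T 1 = {msupp Pi_X}" and Tm: "T m \<subseteq> sets Pi_X"
    using A3 m unfolding tree_decomp_def by auto
  have msets: "msupp Pi_X \<in> sets Pi_X" using A3 unfolding tree_decomp_def by auto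
  have Ssets: "S \<in> sets Pi_X"
    using S(2) msets Tm unfolding level_sigma_def by (rule sig_in_sets)
  define p where "p = measure Pi_X S"
  have p0: "0 \<le> p" by (simp add: p_def)
  have p1: "p \<le> 1" unfolding p_def using Pp by (simp add: prob_space.prob_le_1)
  have pos: "0 < p"
  proof (rule ccontr)
    assume "\<not> 0 < p"
    then have "p = 0" using p0 by simp
    then have "hn = 0" using hn_def p_def by simp
    then show False using cond d1 t by (simp add: power_0_left)
  qed
  define base where "base = p * (t + real d * ln (real n / p)) / real n"
  have lnnp: "0 \<le> ln (real n / p)" using pos p1 n by (simp add: field_simps)
  have base0: "0 < base" unfolding base_def using pos n t lnnp d1
    by (intro divide_pos_pos mult_pos_pos add_pos_nonneg) auto
  have hn_eq: "hn = base powr (1 / (real d + 2))" using hn_def p_def base_def by simp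
  have hn0: "0 < hn" using hn_eq base0 by simp
  have hnpow: "hn ^ (d+2) = base"
  proof -
    have "hn ^ (d+2) = hn powr (real (d+2))" by (simp only: powr_realpow[OF hn0])
    also have "\<dots> = base powr ((1 / (real d + 2)) * real (d+2))" using hn_eq by (simp add: powr_powr)
    also have "\<dots> = base powr 1"
    proof -
      have "(1 / (real d + 2)) * real (d+2) = 1" by simp
      then show ?thesis by (simp only:)
    qed
    also have "\<dots> = base" using base0 by simp
    finally show ?thesis .
  qed
  have hhalf: "hn \<le> 1/2"
  proof -
    have "(1/2::real)^m \<le> (1/2)^1" using m by (intro power_decreasing) auto
    then show ?thesis using hn_le by simp
  qed
  have qh: "p / real n \<le> hn ^ d"
    using key_hd[OF pos p1 n d1 t hn0 hhalf] hnpow base_def cond by simp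
  have lnh: "real d * ln (1/hn) \<le> ln (real n / p)"
  proof -
    have "ln (p / real n) \<le> ln (hn ^ d)" using qh pos n by (intro ln_mono) auto
    then have "ln p - ln (real n) \<le> real d * ln hn" using pos n hn0 by (simp add: ln_div ln_realpow)
    then show ?thesis using pos n hn0 by (simp add: ln_div)
  qed
  have lnh2: "real d ^ 2 * ln (1/hn) \<le> real d * ln (real n / p)"
  proof -
    have "real d ^ 2 * ln (1/hn) = real d * (real d * ln (1/hn))" by (simp add: power2_eq_square)
    also have "\<dots> \<le> real d * ln (real n / p)" using lnh by (intro mult_left_mono) auto
    finally show ?thesis .
  qed
  define s where "s = sqrt (measure Pi_X S * (t + real d ^ 2 * ln (1/hn)) / (real n * hn ^ d))"
  have s0: "0 \<le> s"
  proof -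
    have "0 \<le> ln (1/hn)" using hn0 hhalf by simp
    then show ?thesis unfolding s_def using pos t n hn0 p_def by simp
  qed
  have sle: "s \<le> hn"
  proof -
    have "p * (t + real d ^ 2 * ln (1/hn)) \<le> p * (t + real d * ln (real n / p))"
      using lnh2 pos by (intro mult_left_mono) auto
    also have "\<dots> = real n * hn ^ (d+2)" using hnpow base_def n by simp
    also have "\<dots> = (real n * hn ^ d) * hn^2" by (simp add: power_add power2_eq_square)
    finally have "p * (t + real d ^ 2 * ln (1/hn)) / (real n * hn ^ d) \<le> hn^2"
      using n hn0 by (simp add: divide_le_eq mult.commute)
    then have "s \<le> sqrt (hn^2)" unfolding s_def p_def by (rule real_sqrt_le_mono)
    then show ?thesis using hn0 by simp
  qed
  have obsX_meas: "obsX \<in> borel_measurable D"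
  proof -
    have "continuous_on UNIV (obsX :: 'a \<times> int \<times> real \<Rightarrow> 'a)"
      unfolding obsX_def by (intro continuous_intros)
    then have "obsX \<in> borel_measurable (borel :: ('a \<times> int \<times> real) measure)"
      by (rule borel_measurable_continuous_onI)
    then show ?thesis using measurable_cong_sets[OF sD refl] by blast
  qed
  define AS where "AS = {z\<in>space D. obsX z \<in> S}"
  have AS_eq: "AS = obsX -` S \<inter> space D" unfolding AS_def by auto
  have ASsets: "AS \<in> sets D" unfolding AS_eq
    using obsX_meas Ssets sP by (intro measurable_sets) auto
  have emAS: "emeasure D AS = emeasure Pi_X S"
  proof -
    have "emeasure Pi_X S = emeasure (distr D borel obsX) S" using distr by simp
    also have "\<dots> = emeasure D AS" unfolding AS_eq
      using obsX_meas Ssets sP by (intro emeasure_distr) auto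
    finally show ?thesis by simp
  qed
  have "prob_space (cond_law D S)"
    unfolding cond_law_def AS_def[symmetric]
  proof (rule prob_space_uniform_measure)
    interpret PX: prob_space Pi_X by (rule Pp)
    interpret PD: prob_space D by (rule Dp)
    show "emeasure D AS \<noteq> 0" using emAS pos p_def
      by (simp add: PX.emeasure_eq_measure)
    show "emeasure D AS \<noteq> \<infinity>" by (simp add: PD.emeasure_eq_measure)
  qed
  then have PS: "prob_space (sample D S n)" unfolding sample_def
    by (intro prob_space_PiM)
  have j1: "(1::int) \<in> {-1, 1}" and j2: "(-1::int) \<in> {-1,1}" by auto
  have hyp: "S \<subseteq> msupp Pi_X \<and> S \<in> level_sigma Pi_X T m \<and> S \<noteq> {} \<and>
        0 < hn \<and> hn \<le> (1/2)^m \<and> 0 < t \<and> t + real d ^ 2 * ln (1/hn) \<le> real n * hn ^ d"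
    using S hn0 hn_le t cond by auto
  have ex1: "\<exists>E\<in>sets (sample D S n). measure (sample D S n) E \<ge> 1 - 2 * exp (-t) \<and>
     (\<forall>\<omega>\<in>E. \<forall>x\<in>msupp Pi_X \<inter> S. \<bar>etahat Pi_X D K n hn S 1 \<omega> x - \<eta> 1 x\<bar> \<le> C * (hn + s))"
    unfolding s_def
    by (rule Cprop[unfolded thmA1_const_def, THEN spec, THEN spec, THEN spec, THEN spec, THEN mp])
       (use hyp j1 in simp)
  obtain E1 where E1: "E1 \<in> sets (sample D S n)" "measure (sample D S n) E1 \<ge> 1 - 2 * exp (-t)"
     "\<forall>\<omega>\<in>E1. \<forall>x\<in>msupp Pi_X \<inter> S. \<bar>etahat Pi_X D K n hn S 1 \<omega> x - \<eta> 1 x\<bar> \<le> C * (hn + s)"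
    using ex1 by (elim bexE conjE) blast
  have ex2: "\<exists>E\<in>sets (sample D S n). measure (sample D S n) E \<ge> 1 - 2 * exp (-t) \<and>
     (\<forall>\<omega>\<in>E. \<forall>x\<in>msupp Pi_X \<inter> S. \<bar>etahat Pi_X D K n hn S (-1) \<omega> x - \<eta> (-1) x\<bar> \<le> C * (hn + s))"
    unfolding s_def
    by (rule Cprop[unfolded thmA1_const_def, THEN spec, THEN spec, THEN spec, THEN spec, THEN mp])
       (use hyp j2 in simp)
  obtain E2 where E2: "E2 \<in> sets (sample D S n)" "measure (sample D S n) E2 \<ge> 1 - 2 * exp (-t)"
     "\<forall>\<omega>\<in>E2. \<forall>x\<in>msupp Pi_X \<inter> S. \<bar>etahat Pi_X D K n hn S (-1) \<omega> x - \<eta> (-1) x\<bar> \<le> C * (hn + s)"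
    using ex2 by (elim bexE conjE) blast
  have meas: "measure (sample D S n) (E1 \<inter> E2) \<ge> 1 - 4 * exp (-t)"
  proof -
    interpret P: prob_space "sample D S n" by (rule PS)
    have u: "P.prob (E1 \<union> E2) = P.prob E1 + P.prob (E2 - E1)"
      using E1(1) E2(1) by (rule P.finite_measure_Union')
    have df: "P.prob (E2 - E1) = P.prob E2 - P.prob (E2 \<inter> E1)"
      using E2(1) E1(1) by (rule P.finite_measure_Diff')
    have "E2 \<inter> E1 = E1 \<inter> E2" by blast
    then have "P.prob (E1 \<union> E2) = P.prob E1 + P.prob E2 - P.prob (E1 \<inter> E2)"
      using u df by simp
    moreover have "P.prob (E1 \<union> E2) \<le> 1" by (rule P.prob_le_1)
    ultimately show ?thesis using E1(2) E2(2) by linarith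
  qed
  show ?thesis
  proof (intro bexI conjI ballI)
    show "E1 \<inter> E2 \<in> sets (sample D S n)" using E1(1) E2(1) by auto
    show "1 - 4 * exp (-t) \<le> measure (sample D S n) (E1 \<inter> E2)" by (rule meas)
    fix \<omega> x assume w: "\<omega> \<in> E1 \<inter> E2" and x: "x \<in> msupp Pi_X \<inter> S"
    have b1: "\<bar>etahat Pi_X D K n hn S 1 \<omega> x - \<eta> 1 x\<bar> \<le> C * (hn + s)" using E1(3) w x by auto
    have b2: "\<bar>etahat Pi_X D K n hn S (-1) \<omega> x - \<eta> (-1) x\<bar> \<le> C * (hn + s)" using E2(3) w x by auto
    have C0: "0 \<le> C"
    proof (rule ccontr)
      assume "\<not> 0 \<le> C"
      then have "C * (hn + s) < 0" using hn0 s0 by (simp add: mult_neg_pos)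
      then show False using b1 by linarith
    qed
    have "C * (hn + s) \<le> C * (2 * hn)" using C0 sle by (intro mult_left_mono) auto
    then show "\<bar>fhat Pi_X D K n hn S \<omega> x - fstar \<eta> x\<bar> \<le> 4 * C * hn"
      using b1 b2 C0 hn0 unfolding fhat_def fstar_def by linarith
  qed
qed

end
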